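(* Let $T$ be a skew truss and $P$ a paragon in $T$. Then $P$ is completely prime if and only if there exists $p\in P$ such that, for all $a,d\in T$, $$[ad,ap,p]\in P\implies P_p^a\text{ is an ideal or } d\in P,$$ and $$[da,pa,p]\in P\implies P_p^a\text{ is an ideal or } d\in P.$$
   Context: A heap is a set with a ternary operation $[-,-,-]$ satisfying $[a_1,a_2,[a_3,a_4,a_5]]=[[a_1,a_2,a_3],a_4,a_5]$ and $[a,a,b]=b=[b,a,a]$. A skew truss is a heap with an associative multiplication satisfying $a[b,c,d]=[ab,ac,ad]$ and $[b,c,d]a=[ba,ca,da]$. A normal sub-heap is a non-empty subset $S$ closed under $[-,-,-]$ with $[[a,e,s],a,e]\in S$ for all $a$ and $e,s\in S$; $a\sim_S b$ iff $[a,b,s]\in S$ for some (equivalently all) $s\in S$. A sub-heap $S$ is closed if $[ts',ts,s]\in S$ and $[s't,st,s]\in S$ for all $s,s'\in S$, $t$. A paragon is a non-empty normal sub-heap $P$ all of whose $\sim_P$-classes are closed. An ideal is a normal sub-heap $I$ with $ti,it\in I$ for all $t\in T$, $i\in I$. For $p\in P$, $a\in T$, $P_p^a=\{[q,p,a]\mid q\in P\}$. A paragon $P$ is completely prime if for all $p\in P$ and $a,b,c\in T$: $[ab,ac,p]\in P$ implies that $P_p^a$ is an ideal or $[b,c,p]\in P$; and $[ba,ca,p]\in P$ implies that $P_p^a$ is an ideal or $[b,c,p]\in P$. *)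

theory Defs
  imports Main
begin

text \<open>The skew truss T is modelled as the whole type 'a, with ternary heap operation br
  and multiplication mul.\<close>

definition heap :: "('a \<Rightarrow> 'a \<Rightarrow> 'a \<Rightarrow> 'a) \<Rightarrow> bool" where
  "heap br \<longleftrightarrow>
     (\<forall>a1 a2 a3 a4 a5. br a1 a2 (br a3 a4 a5) = br (br a1 a2 a3) a4 a5) \<and>
     (\<forall>a b. br a a b = b \<and> br b a a = b)"

definition skew_truss :: "('a \<Rightarrow> 'a \<Rightarrow> 'a \<Rightarrow> 'a) \<Rightarrow> ('a \<Rightarrow> 'a \<Rightarrow> 'a) \<Rightarrow> bool" where
  "skew_truss br mul \<longleftrightarrow> heap br \<and>
     (\<forall>a b c. mul (mul a b) c = mul a (mul b c)) \<and>
     (\<forall>a b c d. mul a (br b c d) = br (mul a b) (mul a c) (mul a d)) \<and>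
     (\<forall>a b c d. mul (br b c d) a = br (mul b a) (mul c a) (mul d a))"

definition normal_subheap :: "('a \<Rightarrow> 'a \<Rightarrow> 'a \<Rightarrow> 'a) \<Rightarrow> 'a set \<Rightarrow> bool" where
  "normal_subheap br S \<longleftrightarrow> S \<noteq> {} \<and>
     (\<forall>x\<in>S. \<forall>y\<in>S. \<forall>z\<in>S. br x y z \<in> S) \<and>
     (\<forall>a. \<forall>e\<in>S. \<forall>s\<in>S. br (br a e s) a e \<in> S)"

definition heap_sim :: "('a \<Rightarrow> 'a \<Rightarrow> 'a \<Rightarrow> 'a) \<Rightarrow> 'a set \<Rightarrow> 'a \<Rightarrow> 'a \<Rightarrow> bool" where
  "heap_sim br S a b \<longleftrightarrow> (\<exists>s\<in>S. br a b s \<in> S)"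

definition sim_class :: "('a \<Rightarrow> 'a \<Rightarrow> 'a \<Rightarrow> 'a) \<Rightarrow> 'a set \<Rightarrow> 'a \<Rightarrow> 'a set" where
  "sim_class br S a = {b. heap_sim br S a b}"

definition closed_subheap :: "('a \<Rightarrow> 'a \<Rightarrow> 'a \<Rightarrow> 'a) \<Rightarrow> ('a \<Rightarrow> 'a \<Rightarrow> 'a) \<Rightarrow> 'a set \<Rightarrow> bool" where
  "closed_subheap br mul S \<longleftrightarrow>
     (\<forall>s\<in>S. \<forall>s'\<in>S. \<forall>t. br (mul t s') (mul t s) s \<in> S \<and> br (mul s' t) (mul s t) s \<in> S)"

definition paragon :: "('a \<Rightarrow> 'a \<Rightarrow> 'a \<Rightarrow> 'a) \<Rightarrow> ('a \<Rightarrow> 'a \<Rightarrow> 'a) \<Rightarrow> 'a set \<Rightarrow> bool" where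
  "paragon br mul P \<longleftrightarrow> P \<noteq> {} \<and> normal_subheap br P \<and>
     (\<forall>a. closed_subheap br mul (sim_class br P a))"

definition truss_ideal :: "('a \<Rightarrow> 'a \<Rightarrow> 'a \<Rightarrow> 'a) \<Rightarrow> ('a \<Rightarrow> 'a \<Rightarrow> 'a) \<Rightarrow> 'a set \<Rightarrow> bool" where
  "truss_ideal br mul I \<longleftrightarrow> normal_subheap br I \<and>
     (\<forall>t. \<forall>i\<in>I. mul t i \<in> I \<and> mul i t \<in> I)"

definition shifted :: "('a \<Rightarrow> 'a \<Rightarrow> 'a \<Rightarrow> 'a) \<Rightarrow> 'a set \<Rightarrow> 'a \<Rightarrow> 'a \<Rightarrow> 'a set" where
  "shifted br P p a = {br q p a | q. q \<in> P}"

definition completely_prime :: "('a \<Rightarrow> 'a \<Rightarrow> 'a \<Rightarrow> 'a) \<Rightarrow> ('a \<Rightarrow> 'a \<Rightarrow> 'a) \<Rightarrow> 'a set \<Rightarrow> bool" where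
  "completely_prime br mul P \<longleftrightarrow> paragon br mul P \<and>
     (\<forall>p\<in>P. \<forall>a b c.
        (br (mul a b) (mul a c) p \<in> P \<longrightarrow> truss_ideal br mul (shifted br P p a) \<or> br b c p \<in> P) \<and>
        (br (mul b a) (mul c a) p \<in> P \<longrightarrow> truss_ideal br mul (shifted br P p a) \<or> br b c p \<in> P))"

end

theory Submission
  imports Defs
begin

lemma shifted_sub:
  assumes h: "heap br" and N: "normal_subheap br P" and p: "p \<in> P" and p': "p' \<in> P"
  shows "shifted br P p' a \<subseteq> shifted br P p a"
proof
  fix x assume "x \<in> shifted br P p' a"
  then obtain q where q: "q \<in> P" "x = br q p' a" unfolding shifted_def by blast
  have A: "br q p' (br p p a) = br (br q p' p) p a" using h unfolding heap_def by blast
  have I: "br p p a = a" using h unfolding heap_def by blast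
  have "br q p' p \<in> P" using N q p p' unfolding normal_subheap_def by blast
  then show "x \<in> shifted br P p a" unfolding shifted_def using A I q by auto
qed

lemma shifted_eq:
  assumes h: "heap br" and N: "normal_subheap br P" and p: "p \<in> P" and p': "p' \<in> P"
  shows "shifted br P p' a = shifted br P p a"
  using shifted_sub[OF h N p p'] shifted_sub[OF h N p' p] by blast

theorem lemma4p8:
  fixes br :: "'a \<Rightarrow> 'a \<Rightarrow> 'a \<Rightarrow> 'a" and mul :: "'a \<Rightarrow> 'a \<Rightarrow> 'a" and P :: "'a set"
  assumes "skew_truss br mul"
    and "paragon br mul P"
  shows "completely_prime br mul P \<longleftrightarrow>
    (\<exists>p\<in>P. \<forall>a d.
       (br (mul a d) (mul a p) p \<in> P \<longrightarrow> truss_ideal br mul (shifted br P p a) \<or> d \<in> P) \<and>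
       (br (mul d a) (mul p a) p \<in> P \<longrightarrow> truss_ideal br mul (shifted br P p a) \<or> d \<in> P))"
proof -
  have h: "heap br" using assms(1) unfolding skew_truss_def by blast
  have N: "normal_subheap br P" using assms(2) unfolding paragon_def by blast
  have ne: "P \<noteq> {}" using assms(2) unfolding paragon_def by blast
  have As: "\<And>a1 a2 a3 a4 a5. br a1 a2 (br a3 a4 a5) = br (br a1 a2 a3) a4 a5"
    using h unfolding heap_def by blast
  have I1: "\<And>a b. br a a b = b" and I2: "\<And>a b. br b a a = b" using h unfolding heap_def by blast+
  have cl: "\<And>x y z. x \<in> P \<Longrightarrow> y \<in> P \<Longrightarrow> z \<in> P \<Longrightarrow> br x y z \<in> P"
    using N unfolding normal_subheap_def by blast
  have L: "\<And>a b c d. mul a (br b c d) = br (mul a b) (mul a c) (mul a d)"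
   and R: "\<And>a b c d. mul (br b c d) a = br (mul b a) (mul c a) (mul d a)"
    using assms(1) unfolding skew_truss_def by blast+
  show ?thesis
  proof
    assume cp: "completely_prime br mul P"
    from ne obtain p where p: "p \<in> P" by blast
    show "\<exists>p\<in>P. \<forall>a d.
       (br (mul a d) (mul a p) p \<in> P \<longrightarrow> truss_ideal br mul (shifted br P p a) \<or> d \<in> P) \<and>
       (br (mul d a) (mul p a) p \<in> P \<longrightarrow> truss_ideal br mul (shifted br P p a) \<or> d \<in> P)"
    proof (intro bexI[OF _ p] allI)
      fix a d
      show "(br (mul a d) (mul a p) p \<in> P \<longrightarrow> truss_ideal br mul (shifted br P p a) \<or> d \<in> P) \<and>
       (br (mul d a) (mul p a) p \<in> P \<longrightarrow> truss_ideal br mul (shifted br P p a) \<or> d \<in> P)"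
        using cp p I2[of d p] unfolding completely_prime_def by metis
    qed
  next
    assume "\<exists>p\<in>P. \<forall>a d.
       (br (mul a d) (mul a p) p \<in> P \<longrightarrow> truss_ideal br mul (shifted br P p a) \<or> d \<in> P) \<and>
       (br (mul d a) (mul p a) p \<in> P \<longrightarrow> truss_ideal br mul (shifted br P p a) \<or> d \<in> P)"
    then obtain p where p: "p \<in> P" and H: "\<And>a d.
       (br (mul a d) (mul a p) p \<in> P \<longrightarrow> truss_ideal br mul (shifted br P p a) \<or> d \<in> P) \<and>
       (br (mul d a) (mul p a) p \<in> P \<longrightarrow> truss_ideal br mul (shifted br P p a) \<or> d \<in> P)" by blast
    have main: "(br (mul a b) (mul a c) p' \<in> P \<longrightarrow> truss_ideal br mul (shifted br P p' a) \<or> br b c p' \<in> P) \<and>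
        (br (mul b a) (mul c a) p' \<in> P \<longrightarrow> truss_ideal br mul (shifted br P p' a) \<or> br b c p' \<in> P)"
      if p': "p' \<in> P" for p' a b c
    proof -
      define d where "d = br b c p"
      have sh: "shifted br P p' a = shifted br P p a" using shifted_eq[OF h N p p'] .
      have bk: "br b c p' \<in> P" if "d \<in> P"
      proof -
        have "br d p p' \<in> P" using cl[OF that p p'] .
        moreover have "br d p p' = br b c p'" unfolding d_def using As[of b c p p p'] I1 by simp
        ultimately show ?thesis by simp
      qed
      have e1: "br (mul a d) (mul a p) p = br (mul a b) (mul a c) p"
        unfolding d_def L using As I1 by metis
      have e2: "br (mul d a) (mul p a) p = br (mul b a) (mul c a) p"
        unfolding d_def R using As I1 by metis
      have tr: "br x y p \<in> P" if "br x y p' \<in> P" for x y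
      proof -
        have "br (br x y p') p' p \<in> P" using cl[OF that p' p] .
        moreover have "br (br x y p') p' p = br x y p" using As[of x y p' p' p] I1 by simp
        ultimately show ?thesis by simp
      qed
      show ?thesis using H[of a d] e1 e2 tr bk sh by metis
    qed
    show "completely_prime br mul P" unfolding completely_prime_def
      using assms(2) main by blast
  qed
qed

end
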